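(* There is no open neighborhood $V$ of zero in $C^\infty_{\mathrm{ap}}(\mathbb{R}^n,\mathbb{R}^n)$ such that the restriction $\mathrm{Exp}_{\mathrm{LG}}|_V:V\to\mathrm{Diff}^\infty_{\mathrm{ap}}(\mathbb{R}^n)$ is a $C^1_F$-diffeomorphism onto its image.
   Context: For integer $k\ge0$, $C^k_b(\mathbb{R}^n,\mathbb{R})$ is the space of $C^k$ functions with bounded continuous derivatives of order $\le k$, norm $|f|_k=\max_{|\beta|\le k}\sup|\partial^\beta f|$; $C^k_{\mathrm{ap}}=\{f\in C^k_b:\{f(\cdot+c)\}_{c\in\mathbb{R}^n}\text{ precompact in }C^k_b\}$; $C^\infty_{\mathrm{ap}}=\bigcap_{k\ge1}C^k_{\mathrm{ap}}$ with the Fréchet topology of the norms $|\cdot|_k$; vector-valued versions componentwise. $\mathrm{Diff}^\infty_{\mathrm{ap}}(\mathbb{R}^n)$ is the group of maps $\varphi=\mathrm{id}+f$, $f\in C^\infty_{\mathrm{ap}}(\mathbb{R}^n,\mathbb{R}^n)$, $\inf_x\det(I+[d_xf])>0$, with the Fréchet topology of $f$. $\mathrm{Exp}_{\mathrm{LG}}(u)=\varphi(1)$ where $\varphi$ is the unique $C^1_F$ solution in $\mathrm{Diff}^\infty_{\mathrm{ap}}(\mathbb{R}^n)$ of $\dot\varphi=u\circ\varphi$, $\varphi(0)=\mathrm{id}$. $C^1_F$: Fréchet continuously differentiable (directional derivatives exist and are jointly continuous in point and direction); a $C^1_F$-diffeomorphism onto its image is a homeomorphism onto its image which is $C^1_F$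 with $C^1_F$ inverse. *)

theory Defs
  imports "HOL-Analysis.Analysis"
begin

type_synonym 'n vf = "real^'n \<Rightarrow> real^'n"

definition partial :: "'n::finite \<Rightarrow> (real^'n \<Rightarrow> real) \<Rightarrow> real^'n \<Rightarrow> real" where
  "partial i g x = deriv (\<lambda>t. g (x + t *\<^sub>R axis i 1)) 0"

fun pd :: "'n::finite list \<Rightarrow> (real^'n \<Rightarrow> real) \<Rightarrow> real^'n \<Rightarrow> real" where
  "pd [] g = g"
| "pd (i # l) g = partial i (pd l g)"

definition Ckb :: "nat \<Rightarrow> (real^'n::finite \<Rightarrow> real) set" where
  "Ckb k = {g. \<forall>l::'n list. length l \<le> k \<longrightarrow>
      continuous_on UNIV (pd l g) \<and> bounded (range (pd l g)) \<and>
      (length l < k \<longrightarrow> (\<forall>i x. (\<lambda>t. pd l g (x + t *\<^sub>R axis i 1)) differentiable (at 0)))}"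

definition cnorm :: "nat \<Rightarrow> (real^'n::finite \<Rightarrow> real) \<Rightarrow> real" where
  "cnorm k g = (SUP p \<in> {l::'n list. length l \<le> k} \<times> UNIV. \<bar>pd (fst p) g (snd p)\<bar>)"

text \<open>C^k_ap: translates form a precompact (= totally bounded, C^k_b being complete) set in C^k_b.\<close>
definition Ckap :: "nat \<Rightarrow> (real^'n::finite \<Rightarrow> real) set" where
  "Ckap k = {g \<in> Ckb k. \<forall>e>0. \<exists>C. finite C \<and>
      (\<forall>c. \<exists>d\<in>C. cnorm k (\<lambda>x. g (x + c) - g (x + d)) < e)}"

definition Cinfap :: "(real^'n::finite \<Rightarrow> real) set" where
  "Cinfap = (\<Inter>k\<in>{1..}. Ckap k)"

definition CinfAp :: "('n::finite) vf set" where
  "CinfAp = {f. \<forall>j. (\<lambda>x. f x $ j) \<in> Cinfap}"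

definition vnorm :: "nat \<Rightarrow> ('n::finite) vf \<Rightarrow> real" where
  "vnorm k f = (MAX j \<in> UNIV. cnorm k (\<lambda>x. f x $ j))"

definition apopen :: "('n::finite) vf set \<Rightarrow> bool" where
  "apopen V \<longleftrightarrow> V \<subseteq> CinfAp \<and>
     (\<forall>f\<in>V. \<exists>k e. e > 0 \<and> {g \<in> CinfAp. vnorm k (g - f) < e} \<subseteq> V)"

definition jac :: "('n::finite) vf \<Rightarrow> real^'n \<Rightarrow> real^'n^'n" where
  "jac f x = (\<chi> i j. partial j (\<lambda>y. f y $ i) x)"

text \<open>Diff^infty_ap(R^n), represented by the displacements f with phi = id + f.\<close>
definition DiffAp :: "('n::finite) vf set" where
  "DiffAp = {f \<in> CinfAp. \<exists>\<delta>>0. \<forall>x. det (mat 1 + jac f x) \<ge> \<delta>}"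

definition curve_hasderiv :: "(real \<Rightarrow> ('n::finite) vf) \<Rightarrow> ('n::finite) vf \<Rightarrow> real \<Rightarrow> bool" where
  "curve_hasderiv F D t \<longleftrightarrow> (\<forall>k. ((\<lambda>h. vnorm k (\<lambda>x. (1 / h) *\<^sub>R (F (t + h) x - F t x) - D x))
        \<longlongrightarrow> 0) (at 0))"

definition C1curve :: "(real \<Rightarrow> ('n::finite) vf) \<Rightarrow> bool" where
  "C1curve F \<longleftrightarrow> (\<exists>F'. (\<forall>t. F' t \<in> CinfAp \<and> curve_hasderiv F (F' t) t) \<and>
      (\<forall>t k e. e > 0 \<longrightarrow> (\<exists>d>0. \<forall>s. \<bar>s - t\<bar> < d \<longrightarrow> vnorm k (F' s - F' t) < e)))"

text \<open>phi(t) = id + F t solves  phi' = u o phi, phi(0) = id, as a C^1_F curve in Diff_ap.\<close>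
definition LGflow :: "('n::finite) vf \<Rightarrow> (real \<Rightarrow> ('n::finite) vf) \<Rightarrow> bool" where
  "LGflow u F \<longleftrightarrow> F 0 = (\<lambda>x. 0) \<and> (\<forall>t. F t \<in> DiffAp) \<and> C1curve F \<and>
      (\<forall>t. curve_hasderiv F (\<lambda>x. u (x + F t x)) t)"

definition ExpLG :: "('n::finite) vf \<Rightarrow> ('n::finite) vf" where
  "ExpLG u = (\<lambda>x. x + (THE F. LGflow u F) 1 x)"

text \<open>Displacement phi - id of a diffeomorphism phi (the chart of Diff_ap).\<close>
definition disp :: "('n::finite) vf \<Rightarrow> ('n::finite) vf" where
  "disp \<phi> = (\<lambda>x. \<phi> x - x)"

definition fcont :: "('n::finite) vf set \<Rightarrow> (('n::finite) vf \<Rightarrow> ('n::finite) vf) \<Rightarrow> bool" where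
  "fcont U G \<longleftrightarrow> (\<forall>x\<in>U. \<forall>k e. e > 0 \<longrightarrow>
      (\<exists>m d. d > 0 \<and> (\<forall>y\<in>U. vnorm m (y - x) < d \<longrightarrow> vnorm k (G y - G x) < e)))"

text \<open>C^1_F maps (Bastiani): defined on open U; directional derivatives exist and
  are jointly continuous on U x C^infty_ap.\<close>
definition C1F :: "('n::finite) vf set \<Rightarrow> (('n::finite) vf \<Rightarrow> ('n::finite) vf) \<Rightarrow> bool" where
  "C1F U G \<longleftrightarrow> apopen U \<and> (\<forall>x\<in>U. G x \<in> CinfAp) \<and>
     (\<exists>dG. (\<forall>x\<in>U. \<forall>h\<in>CinfAp. dG x h \<in> CinfAp \<and>
              (\<forall>k. ((\<lambda>t. vnorm k (\<lambda>y. (1 / t) *\<^sub>R (G (\<lambda>z. x z + t *\<^sub>R h z) y - G x y) - dG x h y))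
                      \<longlongrightarrow> 0) (at 0))) \<and>
           (\<forall>x\<in>U. \<forall>h\<in>CinfAp. \<forall>k e. e > 0 \<longrightarrow>
              (\<exists>m d. d > 0 \<and> (\<forall>y\<in>U. \<forall>g\<in>CinfAp.
                  vnorm m (y - x) < d \<and> vnorm m (g - h) < d \<longrightarrow> vnorm k (dG y g - dG x h) < e))))"

definition C1F_diffeo_onto_image :: "('n::finite) vf set \<Rightarrow> (('n::finite) vf \<Rightarrow> ('n::finite) vf) \<Rightarrow> bool" where
  "C1F_diffeo_onto_image V G \<longleftrightarrow> inj_on G V \<and> fcont V G \<and> fcont (G ` V) (inv_into V G) \<and>
     C1F V G \<and> C1F (G ` V) (inv_into V G)"

end

theory Submission
  imports Defs
begin


definition Q :: "'n::finite \<Rightarrow> real \<Rightarrow> real \<Rightarrow> real \<Rightarrow> real \<Rightarrow> real \<Rightarrow> real \<Rightarrow> real^'n \<Rightarrow> real" where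
  "Q i0 w a b th b' th' = (\<lambda>x. a + b * cos (w * x$i0 + th) + b' * cos (w * x$i0 + th'))"

lemma axis_comp: "axis i (c::real) $ j = (if j = i then c else 0)"
  by (simp add: axis_def)

lemma partial_Q:
  "partial i (Q i0 w a b th b' th') = (if i = i0 then Q i0 w 0 (b*w) (th + pi/2) (b'*w) (th' + pi/2) else Q i0 w 0 0 0 0 0)"
proof (rule ext)
  fix x :: "real^'a"
  show "partial i (Q i0 w a b th b' th') x = (if i = i0 then Q i0 w 0 (b*w) (th + pi/2) (b'*w) (th' + pi/2) else Q i0 w 0 0 0 0 0) x"
  proof (cases "i = i0")
    case True
    have "((\<lambda>t. a + b * cos (w * (x$i0 + t) + th) + b' * cos (w * (x$i0 + t) + th')) has_real_derivative
       (b * (- sin (w * (x$i0 + 0) + th) * (w * 1)) + b' * (- sin (w * (x$i0 + 0) + th') * (w * 1)))) (at 0)"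
      by (auto intro!: derivative_eq_intros)
    then have "deriv (\<lambda>t. a + b * cos (w * (x$i0 + t) + th) + b' * cos (w * (x$i0 + t) + th')) 0
       = b * (- sin (w * x$i0 + th) * w) + b' * (- sin (w * x$i0 + th') * w)"
      by (simp add: DERIV_imp_deriv)
    also have "\<dots> = (b*w) * cos (w * x$i0 + (th + pi/2)) + (b'*w) * cos (w * x$i0 + (th' + pi/2))"
      using minus_sin_cos_eq[of "w * x$i0 + th"] minus_sin_cos_eq[of "w * x$i0 + th'"]
      by (simp add: algebra_simps)
    finally show ?thesis using True
      by (simp add: partial_def Q_def axis_comp)
  next
    case False
    then show ?thesis by (simp add: partial_def Q_def axis_comp)
  qed
qed

lemma Q_zero: "Q i0 w 0 0 th 0 th' = Q i0 w 0 0 0 0 0"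
  by (simp add: Q_def)

lemma pd_Q:
  "pd l (Q i0 w a b th b' th') = Q i0 w (if l = [] then a else 0)
     (if set l \<subseteq> {i0} then b * w ^ length l else 0) (th + real (length l) * pi/2)
     (if set l \<subseteq> {i0} then b' * w ^ length l else 0) (th' + real (length l) * pi/2)"
proof (induction l)
  case Nil
  then show ?case by simp
next
  case (Cons i l)
  show ?case
  proof (cases "i = i0")
    case True
    show ?thesis using True
      by (simp add: Cons.IH partial_Q) (simp add: Q_def algebra_simps add_divide_distrib)
  next
    case False
    show ?thesis using False
      by (simp add: Cons.IH partial_Q) (simp add: Q_def)
  qed
qed

lemma Q_bound: "\<bar>Q i0 w a b th b' th' x\<bar> \<le> \<bar>a\<bar> + \<bar>b\<bar> + \<bar>b'\<bar>"
proof -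
  have "\<bar>b * cos (w * x$i0 + th)\<bar> \<le> \<bar>b\<bar>"
    by (simp add: abs_mult mult_left_le)
  moreover have "\<bar>b' * cos (w * x$i0 + th')\<bar> \<le> \<bar>b'\<bar>"
    by (simp add: abs_mult mult_left_le)
  ultimately show ?thesis unfolding Q_def by linarith
qed

lemma pow_le_W: "m \<le> k \<Longrightarrow> \<bar>w\<bar> ^ m \<le> (max 1 \<bar>w\<bar>) ^ k" for w :: real
proof -
  assume "m \<le> k"
  have "\<bar>w\<bar> ^ m \<le> (max 1 \<bar>w\<bar>) ^ m" by (rule power_mono) auto
  also have "\<dots> \<le> (max 1 \<bar>w\<bar>) ^ k" by (rule power_increasing[OF \<open>m \<le> k\<close>]) auto
  finally show ?thesis .
qed

lemma pd_Q_bound: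
  assumes "length l \<le> k"
  shows "\<bar>pd l (Q i0 w a b th b' th') x\<bar> \<le> \<bar>a\<bar> + (\<bar>b\<bar> + \<bar>b'\<bar>) * (max 1 \<bar>w\<bar>) ^ k"
proof -
  let ?W = "(max 1 \<bar>w\<bar>) ^ k"
  have W: "\<bar>w\<bar> ^ length l \<le> ?W" using pow_le_W assms by blast
  have 1: "\<bar>if l = [] then a else 0\<bar> \<le> \<bar>a\<bar>" by auto
  have 2: "\<bar>if set l \<subseteq> {i0} then b * w ^ length l else 0\<bar> \<le> \<bar>b\<bar> * ?W"
    using W by (auto simp: abs_mult power_abs intro: mult_left_mono)
  have 3: "\<bar>if set l \<subseteq> {i0} then b' * w ^ length l else 0\<bar> \<le> \<bar>b'\<bar> * ?W"
    using W by (auto simp: abs_mult power_abs intro: mult_left_mono)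
  show ?thesis unfolding pd_Q
    by (rule order_trans[OF Q_bound]) (use 1 2 3 in \<open>simp add: distrib_right\<close>)
qed

lemma cnorm_le:
  assumes "\<And>l x. length l \<le> k \<Longrightarrow> \<bar>pd l g x\<bar> \<le> M"
  shows "cnorm k g \<le> M"
  unfolding cnorm_def
  by (rule cSUP_least) (auto intro: assms simp: ex_in_conv[symmetric] intro!: exI[of _ "[]"])

lemma Q_bounded: "bounded (range (Q i0 w a b th b' th'))"
  unfolding bounded_iff by (intro exI[of _ "\<bar>a\<bar>+\<bar>b\<bar>+\<bar>b'\<bar>"]) (auto intro: Q_bound)

lemma Q_cnorm: "cnorm k (Q i0 w a b th b' th') \<le> \<bar>a\<bar> + (\<bar>b\<bar> + \<bar>b'\<bar>) * (max 1 \<bar>w\<bar>) ^ k"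
  by (rule cnorm_le) (rule pd_Q_bound)

lemma Q_cont: "continuous_on UNIV (Q i0 w a b th b' th')"
  unfolding Q_def by (intro continuous_intros)

lemma Q_line_diff: "(\<lambda>t. Q i0 w a b th b' th' (x + t *\<^sub>R v)) differentiable (at t0)"
proof -
  have "(\<lambda>t. Q i0 w a b th b' th' (x + t *\<^sub>R v)) = (\<lambda>t. a + b * cos (w * (x$i0 + t * v$i0) + th) + b' * cos (w * (x$i0 + t * v$i0) + th'))"
    by (simp add: Q_def)
  moreover have "((\<lambda>t. a + b * cos (w * (x$i0 + t * v$i0) + th) + b' * cos (w * (x$i0 + t * v$i0) + th')) has_real_derivative
      (b * (- sin (w * (x$i0 + t0 * v$i0) + th) * (w * (v$i0))) + b' * (- sin (w * (x$i0 + t0 * v$i0) + th') * (w * (v$i0))))) (at t0)"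
    by (auto intro!: derivative_eq_intros)
  then have "(\<lambda>t. a + b * cos (w * (x$i0 + t * v$i0) + th) + b' * cos (w * (x$i0 + t * v$i0) + th')) differentiable (at t0)"
    using has_field_derivative_imp_has_derivative differentiableI by blast
  ultimately show ?thesis by simp
qed

lemma Q_Ckb: "Q i0 w a b th b' th' \<in> Ckb k"
  unfolding Ckb_def
proof (intro CollectI allI impI conjI)
  fix l :: "'a list"
  show "continuous_on UNIV (pd l (Q i0 w a b th b' th'))" unfolding pd_Q by (rule Q_cont)
  show "bounded (range (pd l (Q i0 w a b th b' th')))"
    unfolding pd_Q by (rule Q_bounded)
  fix i x
  show "(\<lambda>t. pd l (Q i0 w a b th b' th') (x + t *\<^sub>R axis i 1)) differentiable (at 0)"
    unfolding pd_Q by (rule Q_line_diff)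
qed

lemma cos_lip: "\<bar>cos A - cos B\<bar> \<le> \<bar>A - B\<bar>" for A B :: real
proof -
  have "\<bar>cos A - cos B\<bar> = 2 * \<bar>sin ((A + B) / 2)\<bar> * \<bar>sin ((B - A) / 2)\<bar>"
    by (simp add: cos_diff_cos abs_mult)
  also have "\<dots> \<le> 2 * 1 * \<bar>(B - A) / 2\<bar>"
    by (intro mult_mono abs_sin_x_le_abs_x) auto
  finally show ?thesis by simp
qed

lemma cos_lip_per: "\<bar>cos A - cos B\<bar> \<le> \<bar>A - B - 2 * pi * of_int q\<bar>" for A B :: real
proof -
  have "cos B = cos (B + 2 * pi * of_int q)"
    by (simp add: cos_add)
  then show ?thesis using cos_lip[of A "B + 2 * pi * of_int q"] by (simp add: algebra_simps)
qed

lemma Q_diff_cnorm: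
  "cnorm k (Q i0 w 0 b al (-b) be) \<le> \<bar>b\<bar> * (max 1 \<bar>w\<bar>) ^ k * \<bar>al - be - 2 * pi * of_int q\<bar>"
proof (rule cnorm_le)
  fix l :: "'a list" and x
  assume lk: "length l \<le> k"
  define B where "B = (if set l \<subseteq> {i0} then b * w ^ length l else 0)"
  have B: "\<bar>B\<bar> \<le> \<bar>b\<bar> * (max 1 \<bar>w\<bar>) ^ k"
    using pow_le_W[OF lk, of w] by (auto simp: B_def abs_mult power_abs intro: mult_left_mono)
  have "pd l (Q i0 w 0 b al (-b) be) x = B * (cos (w * x$i0 + (al + real (length l) * pi / 2)) - cos (w * x$i0 + (be + real (length l) * pi / 2)))"
    unfolding pd_Q by (simp add: Q_def B_def algebra_simps)
  also have "\<bar>\<dots>\<bar> \<le> \<bar>B\<bar> * \<bar>al - be - 2 * pi * of_int q\<bar>"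
    unfolding abs_mult using cos_lip_per[of "w * x$i0 + (al + real (length l) * pi / 2)" "w * x$i0 + (be + real (length l) * pi / 2)" q]
    by (intro mult_left_mono) (auto simp: algebra_simps)
  also have "\<dots> \<le> \<bar>b\<bar> * (max 1 \<bar>w\<bar>) ^ k * \<bar>al - be - 2 * pi * of_int q\<bar>"
    by (intro mult_right_mono B) auto
  finally show "\<bar>pd l (Q i0 w 0 b al (-b) be) x\<bar> \<le> \<bar>b\<bar> * (max 1 \<bar>w\<bar>) ^ k * \<bar>al - be - 2 * pi * of_int q\<bar>" .
qed

lemma Q_translate:
  "(\<lambda>x. Q i0 w a b th 0 th' (x + c) - Q i0 w a b th 0 th' (x + d)) = Q i0 w 0 b (th + w * c$i0) (-b) (th + w * d$i0)"
  by (rule ext) (simp add: Q_def algebra_simps)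

lemma Q_Ckap: "Q i0 w a b th 0 th' \<in> Ckap k"
  unfolding Ckap_def
proof (intro CollectI conjI allI impI Q_Ckb)
  fix e :: real assume e: "e > 0"
  define W where "W = \<bar>b\<bar> * (max 1 \<bar>w\<bar>) ^ k"
  have W0: "W \<ge> 0" by (simp add: W_def)
  obtain M :: nat where M: "M > W * 2 * pi / e" "M > 0"
    by (metis add.commute less_add_one max.strict_boundedE of_nat_0_less_iff reals_Archimedean2 max_less_iff_conj less_max_iff_disj)
  show "\<exists>C. finite C \<and> (\<forall>c. \<exists>d\<in>C. cnorm k (\<lambda>x. Q i0 w a b th 0 th' (x + c) - Q i0 w a b th 0 th' (x + d)) < e)"
  proof (cases "w = 0")
    case True
    show ?thesis
    proof (intro exI[of _ "{0}"] conjI allI)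
      fix c :: "real^'a"
      have "cnorm k (\<lambda>x. Q i0 w a b th 0 th' (x + c) - Q i0 w a b th 0 th' (x + 0)) \<le> W * \<bar>(th + w * c$i0) - (th + w * (0::real^'a)$i0) - 2 * pi * of_int 0\<bar>"
        unfolding Q_translate W_def by (rule Q_diff_cnorm)
      then show "\<exists>d\<in>{0}. cnorm k (\<lambda>x. Q i0 w a b th 0 th' (x + c) - Q i0 w a b th 0 th' (x + d)) < e"
        using True e by simp
    qed simp
  next
    case False
    define C where "C = (\<lambda>j::nat. (2 * pi * real j / (w * real M)) *\<^sub>R (axis i0 1 :: real^'a)) ` {..<M}"
    show ?thesis
    proof (intro exI[of _ C] conjI allI)
      show "finite C" by (simp add: C_def)
      fix c :: "real^'a"
      define n where "n = floor (w * c$i0 * real M / (2 * pi))"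
      define j where "j = nat (n mod int M)"
      define q where "q = n div int M"
      have nqj: "n = q * int M + int j" using M(2) by (simp add: j_def q_def)
      have fl: "real_of_int n \<le> w * c$i0 * real M / (2 * pi)" "w * c$i0 * real M / (2 * pi) < real_of_int n + 1"
        unfolding n_def by linarith+
      have jM: "j < M" using M(2) unfolding j_def by (simp add: nat_less_iff)
      define d where "d = (2 * pi * real j / (w * real M)) *\<^sub>R (axis i0 1 :: real^'a)"
      have dC: "d \<in> C" unfolding C_def d_def using jM by blast
      have wd: "w * d$i0 = 2 * pi * real j / real M" using False M(2) by (simp add: d_def)
      have key: "(th + w * c$i0) - (th + w * d$i0) - 2 * pi * of_int q = w * c$i0 - 2 * pi * real_of_int n / real M"
        using M(2) unfolding wd nqj by (simp add: field_simps)
      have "\<bar>w * c$i0 - 2 * pi * real_of_int n / real M\<bar> \<le> 2 * pi / real M"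
      proof -
        have "0 \<le> w * c$i0 * real M / (2 * pi) - real_of_int n" "w * c$i0 * real M / (2 * pi) - real_of_int n \<le> 1"
          using fl by linarith+
        then have "0 \<le> (w * c$i0 * real M / (2 * pi) - real_of_int n) * (2 * pi / real M)"
          "(w * c$i0 * real M / (2 * pi) - real_of_int n) * (2 * pi / real M) \<le> 1 * (2 * pi / real M)"
          by (intro mult_nonneg_nonneg mult_right_mono; simp)+
        moreover have "(w * c$i0 * real M / (2 * pi) - real_of_int n) * (2 * pi / real M) = w * c$i0 - 2 * pi * real_of_int n / real M"
          using M(2) by (simp add: field_simps)
        ultimately show ?thesis by linarith
      qed
      then have "W * \<bar>(th + w * c$i0) - (th + w * d$i0) - 2 * pi * of_int q\<bar> \<le> W * (2 * pi / real M)"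
        unfolding key by (intro mult_left_mono W0)
      also have "\<dots> < e"
        using M e by (simp add: field_simps)
      finally have "W * \<bar>(th + w * c$i0) - (th + w * d$i0) - 2 * pi * of_int q\<bar> < e" .
      moreover have "cnorm k (\<lambda>x. Q i0 w a b th 0 th' (x + c) - Q i0 w a b th 0 th' (x + d)) \<le> W * \<bar>(th + w * c$i0) - (th + w * d$i0) - 2 * pi * of_int q\<bar>"
        unfolding Q_translate W_def by (rule Q_diff_cnorm)
      ultimately show "\<exists>d\<in>C. cnorm k (\<lambda>x. Q i0 w a b th 0 th' (x + c) - Q i0 w a b th 0 th' (x + d)) < e"
        using dC by force
    qed
  qed
qed

lemma Q_Cinfap: "Q i0 w a b th 0 th' \<in> Cinfap"
  unfolding Cinfap_def using Q_Ckap by blast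



lemma CinfAp_comp_bdd:
  assumes "f \<in> CinfAp" shows "\<exists>B. \<forall>x. \<bar>f x $ j\<bar> \<le> B"
proof -
  have "(\<lambda>x. f x $ j) \<in> Ckap 1" using assms unfolding CinfAp_def Cinfap_def by auto
  then have "bounded (range (pd [] (\<lambda>x. f x $ j)))" unfolding Ckap_def Ckb_def
    by (metis (no_types, lifting) list.size(3) mem_Collect_eq zero_le)
  then show ?thesis unfolding bounded_iff by (auto simp: real_norm_def)
qed

lemma pt_le_vnorm0:
  assumes "\<And>j. \<exists>B. \<forall>x. \<bar>f x $ j\<bar> \<le> B"
  shows "\<bar>f x $ j\<bar> \<le> vnorm 0 f"
proof -
  obtain B where B: "\<forall>x. \<bar>f x $ j\<bar> \<le> B" using assms by blast
  have "\<bar>f x $ j\<bar> \<le> cnorm 0 (\<lambda>x. f x $ j)"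
    unfolding cnorm_def
  proof (rule cSUP_upper2[of _ _ "([], x)"])
    show "bdd_above ((\<lambda>p. \<bar>pd (fst p) (\<lambda>x. f x $ j) (snd p)\<bar>) ` ({l::'a list. length l \<le> 0} \<times> UNIV))"
      using B by (auto intro!: bdd_aboveI[of _ B])
  qed auto
  also have "\<dots> \<le> vnorm 0 f" unfolding vnorm_def by (rule Max_ge) auto
  finally show ?thesis .
qed

lemma flow_deriv:
  assumes fl: "LGflow u F" and u: "u \<in> CinfAp"
  shows "((\<lambda>s. F s x $ j) has_real_derivative (u (x + F t x) $ j)) (at t)"
proof -
  define g where "g h = (\<lambda>y. (1 / h) *\<^sub>R (F (t + h) y - F t y) - u (y + F t y))" for h
  have cd: "curve_hasderiv F (\<lambda>x. u (x + F t x)) t" using fl unfolding LGflow_def by blast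
  then have lim: "((\<lambda>h. vnorm 0 (g h)) \<longlongrightarrow> 0) (at 0)" unfolding curve_hasderiv_def g_def by blast
  have inC: "F s \<in> CinfAp" for s using fl unfolding LGflow_def DiffAp_def by blast
  have bdd: "\<exists>B. \<forall>y. \<bar>g h y $ i\<bar> \<le> B" for h i
  proof -
    obtain B1 where B1: "\<forall>y. \<bar>F (t + h) y $ i\<bar> \<le> B1" using CinfAp_comp_bdd[OF inC] by blast
    obtain B2 where B2: "\<forall>y. \<bar>F t y $ i\<bar> \<le> B2" using CinfAp_comp_bdd[OF inC] by blast
    obtain B3 where B3: "\<forall>y. \<bar>u y $ i\<bar> \<le> B3" using CinfAp_comp_bdd[OF u] by blast
    have "\<bar>g h y $ i\<bar> \<le> \<bar>1 / h\<bar> * (B1 + B2) + B3" for y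
    proof -
      have "\<bar>g h y $ i\<bar> = \<bar>(1 / h) * (F (t + h) y $ i - F t y $ i) - u (y + F t y) $ i\<bar>"
        by (simp add: g_def)
      also have "\<dots> \<le> \<bar>1 / h\<bar> * \<bar>F (t + h) y $ i - F t y $ i\<bar> + \<bar>u (y + F t y) $ i\<bar>"
        using abs_triangle_ineq4[of "(1/h) * (F (t + h) y $ i - F t y $ i)" "u (y + F t y) $ i"] by (simp only: abs_mult)
      also have "\<dots> \<le> \<bar>1 / h\<bar> * (B1 + B2) + B3"
        using B1 B2 B3 by (intro add_mono mult_left_mono) (auto intro!: order_trans[OF abs_triangle_ineq4] add_mono)
      finally show ?thesis .
    qed
    then show ?thesis by blast
  qed
  have "((\<lambda>h. g h x $ j) \<longlongrightarrow> 0) (at 0)"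
  proof (rule Lim_null_comparison[OF _ lim])
    have "\<bar>g h x $ j\<bar> \<le> vnorm 0 (g h)" for h
      by (rule pt_le_vnorm0) (rule bdd)
    then show "\<forall>\<^sub>F h in at 0. norm (g h x $ j) \<le> vnorm 0 (g h)" by simp
  qed
  then have "((\<lambda>h. g h x $ j + u (x + F t x) $ j) \<longlongrightarrow> 0 + u (x + F t x) $ j) (at 0)"
    by (intro tendsto_intros)
  moreover have "g h x $ j + u (x + F t x) $ j = (F (t + h) x $ j - F t x $ j) / h" for h
    by (simp add: g_def divide_inverse mult.commute)
  ultimately show ?thesis unfolding DERIV_def by simp
qed



definition fld :: "'n::finite \<Rightarrow> real \<Rightarrow> real \<Rightarrow> real \<Rightarrow> 'n vf" where
  "fld i0 w K s = (\<lambda>x. (K * (1 + s * cos (w * x$i0))) *\<^sub>R axis i0 1)"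

lemma fld_comp: "(\<lambda>x. fld i0 w K s x $ j) = (if j = i0 then Q i0 w K (K * s) 0 0 0 else Q i0 w 0 0 0 0 0)"
  by (rule ext) (simp add: fld_def Q_def axis_comp algebra_simps)

lemma fld_CinfAp: "fld i0 w K s \<in> CinfAp"
  unfolding CinfAp_def
proof (intro CollectI allI)
  fix j
  show "(\<lambda>x. fld i0 w K s x $ j) \<in> Cinfap"
  proof (cases "j = i0")
    case True
    then show ?thesis unfolding fld_comp using Q_Cinfap[of i0 w K "K * s" 0 0] by simp
  next
    case False
    then show ?thesis unfolding fld_comp using Q_Cinfap[of i0 w 0 0 0 0] by simp
  qed
qed

lemma fld_vnorm: "vnorm k (fld i0 w K s) \<le> \<bar>K\<bar> + \<bar>K * s\<bar> * (max 1 \<bar>w\<bar>) ^ k"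
  unfolding vnorm_def
proof (rule Max.boundedI)
  show "finite (range (\<lambda>j. cnorm k (\<lambda>x. fld i0 w K s x $ j)))" by simp
  show "range (\<lambda>j. cnorm k (\<lambda>x. fld i0 w K s x $ j)) \<noteq> {}" by simp
  fix c assume "c \<in> range (\<lambda>j. cnorm k (\<lambda>x. fld i0 w K s x $ j))"
  then obtain j where c: "c = cnorm k (\<lambda>x. fld i0 w K s x $ j)" by blast
  show "c \<le> \<bar>K\<bar> + \<bar>K * s\<bar> * (max 1 \<bar>w\<bar>) ^ k"
  proof (cases "j = i0")
    case True
    then show ?thesis using c Q_cnorm[of k i0 w K "K * s" 0 0 0] by (simp add: fld_comp)
  next
    case False
    have z: "0 \<le> \<bar>K\<bar> + \<bar>K * s\<bar> * (max 1 \<bar>w\<bar>) ^ k" by simp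
    have h: "cnorm k (Q i0 w 0 0 0 0 0) \<le> 0" using Q_cnorm[of k i0 w 0 0 0 0 0] by simp
    show ?thesis using False c order_trans[OF h z] by (simp add: fld_comp)
  qed
qed

lemma fld_ode:
  assumes fl: "LGflow (fld i0 w K s) F"
    and HD: "\<And>r. (H has_real_derivative (1 / (K * (1 + s * cos (w * r))))) (at r)"
    and pos: "\<And>r. K * (1 + s * cos (w * r)) > 0"
  shows "H (x$i0 + F t x $ i0) = H (x$i0) + t" "j \<noteq> i0 \<Longrightarrow> F t x $ j = 0"
proof -
  have F0: "F 0 = (\<lambda>x. 0)" using fl unfolding LGflow_def by blast
  have D: "((\<lambda>s. F s x $ j) has_real_derivative (fld i0 w K s (x + F t x) $ j)) (at t)" for j t
    by (rule flow_deriv[OF fl fld_CinfAp])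
  define z where "z t = x$i0 + F t x $ i0" for t
  have Dz: "(z has_real_derivative (K * (1 + s * cos (w * z t)))) (at t)" for t
    unfolding z_def using DERIV_add[OF DERIV_const[of "x$i0"] D[of i0 t]] by (simp add: fld_def)
  have DHz: "((\<lambda>t. H (z t) - t) has_real_derivative 0) (at t)" for t
  proof -
    have "((\<lambda>t. H (z t) - t) has_real_derivative (1 / (K * (1 + s * cos (w * z t)))) * (K * (1 + s * cos (w * z t))) - 1) (at t)"
      by (intro DERIV_diff DERIV_chain2[OF HD Dz] DERIV_ident)
    moreover have "K \<noteq> 0" "1 + s * cos (w * z t) \<noteq> 0" using pos[of "z t"] by auto
    ultimately show ?thesis by simp
  qed
  have "H (z t) - t = H (z 0) - 0"
    by (rule DERIV_isconst_all) (use DHz in blast)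
  then show "H (x$i0 + F t x $ i0) = H (x$i0) + t" by (simp add: z_def F0)
  assume "j \<noteq> i0"
  then have "((\<lambda>s. F s x $ j) has_real_derivative 0) (at t)" for t
    using D[of j t] by (simp add: fld_def axis_comp)
  then have "F t x $ j = F 0 x $ j" by (intro DERIV_isconst_all) blast
  then show "F t x $ j = 0" by (simp add: F0)
qed

lemma H_inj:
  assumes HD: "\<And>r. (H has_real_derivative (1 / (K * (1 + s * cos (w * r))))) (at r)"
    and pos: "\<And>r. K * (1 + s * cos (w * r)) > 0"
  shows "inj H"
proof -
  have "strict_mono H"
  proof (rule strict_monoI)
    fix a b :: real assume "a < b"
    then show "H a < H b"
    proof (rule DERIV_pos_imp_increasing)
      fix x :: real
      show "\<exists>y. (H has_real_derivative y) (at x) \<and> 0 < y"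
        using HD[of x] pos[of x] by (intro exI[of _ "1 / (K * (1 + s * cos (w * x)))"]) simp
    qed
  qed
  then show ?thesis by (rule strict_mono_imp_inj_on)
qed

lemma fld_unique:
  assumes fl: "LGflow (fld i0 w K s) F" and fl': "LGflow (fld i0 w K s) F'"
    and HD: "\<And>r. (H has_real_derivative (1 / (K * (1 + s * cos (w * r))))) (at r)"
    and pos: "\<And>r. K * (1 + s * cos (w * r)) > 0"
  shows "F' = F"
proof (intro ext)
  fix t x
  show "F' t x = F t x"
  proof (subst vec_eq_iff, intro allI)
    fix j
    show "F' t x $ j = F t x $ j"
    proof (cases "j = i0")
      case True
      have "H (x$i0 + F' t x $ i0) = H (x$i0 + F t x $ i0)"
        using fld_ode(1)[OF fl HD pos] fld_ode(1)[OF fl' HD pos] by simp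
      then have "x$i0 + F' t x $ i0 = x$i0 + F t x $ i0"
        using H_inj[OF HD pos] by (simp add: inj_eq)
      then show ?thesis using True by simp
    next
      case False
      then show ?thesis using fld_ode(2)[OF fl HD pos] fld_ode(2)[OF fl' HD pos] by simp
    qed
  qed
qed

lemma fld_time1:
  assumes fl: "LGflow (fld i0 w K s) F"
    and HD: "\<And>r. (H has_real_derivative (1 / (K * (1 + s * cos (w * r))))) (at r)"
    and pos: "\<And>r. K * (1 + s * cos (w * r)) > 0"
    and per: "\<And>r. H (r + p) = H r + 1"
  shows "F 1 = (\<lambda>x. p *\<^sub>R axis i0 1)"
proof (intro ext)
  fix x
  show "F 1 x = p *\<^sub>R axis i0 1"
  proof (subst vec_eq_iff, intro allI)
    fix j
    show "F 1 x $ j = (p *\<^sub>R axis i0 1) $ j"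
    proof (cases "j = i0")
      case True
      have "H (x$i0 + F 1 x $ i0) = H (x$i0 + p)"
        using fld_ode(1)[OF fl HD pos] per by simp
      then have "x$i0 + F 1 x $ i0 = x$i0 + p"
        using H_inj[OF HD pos] by (simp add: inj_eq)
      then show ?thesis using True by simp
    next
      case False
      then show ?thesis using fld_ode(2)[OF fl HD pos] by (simp add: axis_comp)
    qed
  qed
qed

lemma fld_ExpLG:
  assumes ex: "\<exists>F. LGflow (fld i0 w K s) F"
    and HD: "\<And>r. (H has_real_derivative (1 / (K * (1 + s * cos (w * r))))) (at r)"
    and pos: "\<And>r. K * (1 + s * cos (w * r)) > 0"
    and per: "\<And>r. H (r + p) = H r + 1"
  shows "disp (ExpLG (fld i0 w K s)) = (\<lambda>x. p *\<^sub>R axis i0 1)"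
proof -
  obtain F where fl: "LGflow (fld i0 w K s) F" using ex by blast
  have "(THE F. LGflow (fld i0 w K s) F) = F"
    by (rule the_equality[of "LGflow (fld i0 w K s)" F, OF fl]) (rule fld_unique[OF fl _ HD pos])
  then show ?thesis
    using fld_time1[OF fl HD pos per] by (simp add: ExpLG_def disp_def)
qed

lemma ExpLG_none:
  assumes "\<not> (\<exists>F. LGflow u F)" "\<not> (\<exists>F. LGflow v F)"
  shows "ExpLG u = ExpLG v"
proof -
  have "LGflow u = LGflow v" using assms by (intro ext) blast
  then show ?thesis by (simp add: ExpLG_def)
qed



lemma denom_pos: "0 < s \<Longrightarrow> s \<le> 1/2 \<Longrightarrow> 1/2 \<le> 1 + s * cos (y::real)"
proof -
  assume "0 < s" "s \<le> 1/2"
  have "- 1 \<le> cos y" by simp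
  then have "s * (-1) \<le> s * cos y" using \<open>0 < s\<close> by (intro mult_left_mono) auto
  then show ?thesis using \<open>s \<le> 1/2\<close> by linarith
qed

lemma H_exists:
  fixes s w p :: real
  assumes s: "0 < s" "s \<le> 1/2" and w: "w > 0" and p: "p = 2 * pi / w"
  shows "\<exists>K H. K > 0 \<and> K \<le> 2 * p \<and> (\<forall>r. (H has_real_derivative (1 / (K * (1 + s * cos (w * r))))) (at r))
     \<and> (\<forall>r. H (r + p) = H r + 1) \<and> (\<forall>r. K * (1 + s * cos (w * r)) > 0)"
proof -
  define f where "f r = 1 / (1 + s * cos (w * r))" for r
  have dp: "1/2 \<le> 1 + s * cos (w * r)" for r using denom_pos[OF s] by blast
  have contf: "isCont f x" for x
    unfolding f_def using dp[of x] by (intro continuous_intros) auto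
  obtain G where G0: "\<forall>x::real. -\<infinity> < ereal x \<longrightarrow> ereal x < \<infinity> \<longrightarrow> (G has_vector_derivative f x) (at x)"
    using einterval_antiderivative[of "-\<infinity>" "\<infinity>" f] contf by auto
  have G: "(G has_real_derivative f x) (at x)" for x
    using G0 by (simp add: has_real_derivative_iff_has_vector_derivative)
  have fpos: "f x > 0" for x unfolding f_def using dp[of x] by simp
  have fle: "f x \<le> 2" for x
  proof -
    have "f x \<le> 1 / (1/2)" unfolding f_def using dp[of x] by (intro divide_left_mono) auto
    then show ?thesis by simp
  qed
  have p0: "p > 0" using w p by simp
  define K where "K = G p - G 0"
  have per: "G (r + p) - G r = K" for r
  proof -
    have fper: "f (r + p) = f r" for r
    proof -
      have "w * (r + p) = w * r + 2 * pi" using w p by (simp add: field_simps)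
      then show ?thesis by (simp add: f_def)
    qed
    have "((\<lambda>r. G (r + p) - G r) has_real_derivative 0) (at r)" for r
    proof -
      have "((\<lambda>r. G (r + p) - G r) has_real_derivative (f (r + p) * (1 + 0) - f r)) (at r)"
        by (intro DERIV_diff DERIV_chain2[OF G] DERIV_add DERIV_ident DERIV_const G)
      then show ?thesis by (simp add: fper)
    qed
    then have "G (r + p) - G r = G (0 + p) - G 0" by (intro DERIV_isconst_all) blast
    then show ?thesis by (simp add: K_def)
  qed
  have Kpos: "K > 0"
  proof -
    have "G 0 < G p"
      by (rule DERIV_pos_imp_increasing[OF p0]) (use G fpos in blast)
    then show ?thesis by (simp add: K_def)
  qed
  have Kle: "K \<le> 2 * p"
  proof -
    obtain z where "G p - G 0 = (p - 0) * f z" using MVT2[OF p0, of G f] G by blast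
    then have "K = p * f z" by (simp add: K_def)
    also have "\<dots> \<le> p * 2" using fle p0 by (intro mult_left_mono) auto
    finally show ?thesis by simp
  qed
  define H where "H r = G r / K" for r
  show ?thesis
  proof (intro exI[of _ K] exI[of _ H] conjI allI Kpos Kle)
    fix r
    have "(H has_real_derivative f r / K) (at r)" unfolding H_def by (intro DERIV_cdivide G)
    then show "(H has_real_derivative (1 / (K * (1 + s * cos (w * r))))) (at r)" by (simp add: f_def mult.commute)
    show "H (r + p) = H r + 1" using per[of r] Kpos by (simp add: H_def field_simps)
    show "K * (1 + s * cos (w * r)) > 0" using Kpos dp[of r] by simp
  qed
qed

lemma fld_inj:
  assumes "K > 0" "K' > 0" "w \<noteq> 0" "fld i0 w K s = fld i0 w K' s'"
  shows "s = s'"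
proof -
  have e0: "fld i0 w K s 0 $ i0 = fld i0 w K' s' 0 $ i0" using assms(4) by simp
  define x1 where "x1 = (pi / (2 * w)) *\<^sub>R (axis i0 1 :: real^'a)"
  have e1: "fld i0 w K s x1 $ i0 = fld i0 w K' s' x1 $ i0" using assms(4) by simp
  have wx: "w * x1 $ i0 = pi / 2" using assms(3) by (simp add: x1_def)
  have "K = K'" using e1 by (simp add: fld_def wx)
  moreover have "K * (1 + s) = K' * (1 + s')" using e0 by (simp add: fld_def)
  ultimately show ?thesis using assms(1) by simp
qed



theorem corollary3p5:
  shows "\<not> (\<exists>V :: ('n::finite) vf set. apopen V \<and> (\<lambda>x. 0) \<in> V \<and>
            C1F_diffeo_onto_image V (\<lambda>u. disp (ExpLG u)))"
proof
  assume "\<exists>V :: ('n::finite) vf set. apopen V \<and> (\<lambda>x. 0) \<in> V \<and> C1F_diffeo_onto_image V (\<lambda>u. disp (ExpLG u))"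
  then obtain V :: "'n vf set" where op: "apopen V" and V0: "(\<lambda>x. 0) \<in> V"
    and dif: "C1F_diffeo_onto_image V (\<lambda>u. disp (ExpLG u))" by blast
  have inj: "inj_on (\<lambda>u. disp (ExpLG u)) V" using dif unfolding C1F_diffeo_onto_image_def by blast
  obtain k e where e: "e > 0" and ball: "{g \<in> CinfAp. vnorm k (g - (\<lambda>x. 0)) < e} \<subseteq> V"
    using op V0 unfolding apopen_def by blast
  define i0 :: 'n where "i0 = undefined"
  define p where "p = e / 4"
  define w where "w = 2 * pi / p"
  define W where "W = (max 1 \<bar>w\<bar>) ^ k"
  define \<sigma> where "\<sigma> = 1 / (2 * W)"
  have p0: "p > 0" using e by (simp add: p_def)
  have w0: "w > 0" using p0 by (simp add: w_def)
  have pw: "p = 2 * pi / w" using p0 by (simp add: w_def)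
  have W1: "W \<ge> 1" unfolding W_def by simp
  have sig: "0 < \<sigma>" "\<sigma> \<le> 1/2" using W1 by (auto simp: \<sigma>_def field_simps)
  have sigW: "\<sigma> * W = 1/2" using W1 by (simp add: \<sigma>_def)
  have good: "\<exists>K H. K > 0 \<and> (\<forall>r. (H has_real_derivative (1 / (K * (1 + s * cos (w * r))))) (at r))
     \<and> (\<forall>r. H (r + p) = H r + 1) \<and> (\<forall>r. K * (1 + s * cos (w * r)) > 0) \<and> fld i0 w K s \<in> V"
    if s: "0 < s" "s \<le> \<sigma>" for s
  proof -
    have s2: "s \<le> 1/2" using s sig by linarith
    obtain K H where K: "K > 0" "K \<le> 2 * p" and HD: "\<forall>r. (H has_real_derivative (1 / (K * (1 + s * cos (w * r))))) (at r)"
      and per: "\<forall>r. H (r + p) = H r + 1" and pos: "\<forall>r. K * (1 + s * cos (w * r)) > 0"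
      using H_exists[OF s(1) s2 w0 pw] by blast
    have sW: "s * W \<le> 1/2" using mult_right_mono[OF s(2), of W] W1 sigW by linarith
    have "vnorm k (fld i0 w K s - (\<lambda>x. 0)) = vnorm k (fld i0 w K s)" by (simp add: fun_diff_def)
    also have "\<dots> \<le> \<bar>K\<bar> + \<bar>K * s\<bar> * W" unfolding W_def by (rule fld_vnorm)
    also have "\<dots> = K * (1 + s * W)" using K s by (simp add: abs_mult algebra_simps)
    also have "\<dots> \<le> (2 * p) * (1 + 1/2)" using K sW s W1 by (intro mult_mono) auto
    also have "\<dots> < e" using p0 by (simp add: p_def)
    finally have "fld i0 w K s \<in> V" using ball fld_CinfAp by blast
    then show ?thesis using K HD per pos by blast
  qed
  have pair: False
    if s: "0 < s" "s \<le> \<sigma>" "0 < s'" "s' \<le> \<sigma>" "s \<noteq> s'"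
      and same: "(\<exists>F. LGflow (fld i0 w K s) F) = (\<exists>F. LGflow (fld i0 w K' s') F)"
      and K: "K > 0" "\<forall>r. (H has_real_derivative (1 / (K * (1 + s * cos (w * r))))) (at r)"
         "\<forall>r. H (r + p) = H r + 1" "\<forall>r. K * (1 + s * cos (w * r)) > 0" "fld i0 w K s \<in> V"
      and K': "K' > 0" "\<forall>r. (H' has_real_derivative (1 / (K' * (1 + s' * cos (w * r))))) (at r)"
         "\<forall>r. H' (r + p) = H' r + 1" "\<forall>r. K' * (1 + s' * cos (w * r)) > 0" "fld i0 w K' s' \<in> V"
    for s s' K K' H H'
  proof -
    have "disp (ExpLG (fld i0 w K s)) = disp (ExpLG (fld i0 w K' s'))"
    proof (cases "\<exists>F. LGflow (fld i0 w K s) F")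
      case True
      then have T': "\<exists>F. LGflow (fld i0 w K' s') F" using same by blast
      show ?thesis
        using fld_ExpLG[OF True K(2)[rule_format] K(4)[rule_format] K(3)[rule_format]]
          fld_ExpLG[OF T' K'(2)[rule_format] K'(4)[rule_format] K'(3)[rule_format]] by simp
    next
      case False
      then have F': "\<not> (\<exists>F. LGflow (fld i0 w K' s') F)" using same by blast
      show ?thesis using ExpLG_none[OF False F'] by simp
    qed
    then have "fld i0 w K s = fld i0 w K' s'" by (rule inj_onD[OF inj _ K(5) K'(5)])
    then have "s = s'" using fld_inj[OF K(1) K'(1), of w] w0 by simp
    then show False using s by simp
  qed
  obtain K1 H1 where G1: "K1 > 0" "\<forall>r. (H1 has_real_derivative (1 / (K1 * (1 + \<sigma> * cos (w * r))))) (at r)"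
         "\<forall>r. H1 (r + p) = H1 r + 1" "\<forall>r. K1 * (1 + \<sigma> * cos (w * r)) > 0" "fld i0 w K1 \<sigma> \<in> V"
    using good[of \<sigma>] sig by auto
  obtain K2 H2 where G2: "K2 > 0" "\<forall>r. (H2 has_real_derivative (1 / (K2 * (1 + (\<sigma>/2) * cos (w * r))))) (at r)"
         "\<forall>r. H2 (r + p) = H2 r + 1" "\<forall>r. K2 * (1 + (\<sigma>/2) * cos (w * r)) > 0" "fld i0 w K2 (\<sigma>/2) \<in> V"
    using good[of "\<sigma>/2"] sig by auto
  obtain K3 H3 where G3: "K3 > 0" "\<forall>r. (H3 has_real_derivative (1 / (K3 * (1 + (\<sigma>/3) * cos (w * r))))) (at r)"
         "\<forall>r. H3 (r + p) = H3 r + 1" "\<forall>r. K3 * (1 + (\<sigma>/3) * cos (w * r)) > 0" "fld i0 w K3 (\<sigma>/3) \<in> V"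
    using good[of "\<sigma>/3"] sig by auto
  consider "(\<exists>F. LGflow (fld i0 w K1 \<sigma>) F) = (\<exists>F. LGflow (fld i0 w K2 (\<sigma>/2)) F)"
    | "(\<exists>F. LGflow (fld i0 w K1 \<sigma>) F) = (\<exists>F. LGflow (fld i0 w K3 (\<sigma>/3)) F)"
    | "(\<exists>F. LGflow (fld i0 w K2 (\<sigma>/2)) F) = (\<exists>F. LGflow (fld i0 w K3 (\<sigma>/3)) F)"
    by blast
  then show False
  proof cases
    case 1
    show False by (rule pair[OF _ _ _ _ _ 1 G1 G2]) (use sig in simp_all)
  next
    case 2
    show False by (rule pair[OF _ _ _ _ _ 2 G1 G3]) (use sig in simp_all)
  next
    case 3
    show False by (rule pair[OF _ _ _ _ _ 3 G2 G3]) (use sig in simp_all)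
  qed
qed

end
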